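(* For every $n\in\mathbb{N}$ there exists an oriented ordered graph $\overrightarrow{G}$ on $2n$ vertices in which every vertex has degree $1$, which contains no oriented ordered subgraph $\overrightarrow{M}_2$ and no oriented ordered subgraph $\overrightarrow{P}_3$, and which satisfies $\overrightarrow{\chi}(\overrightarrow{G})=n+1$.
   Context: An ordered graph is a finite simple undirected graph with a linear order on its vertices. An oriented ordered graph $\overrightarrow{G}$ is an ordered graph in which each edge is given exactly one direction. An ordered homomorphism between oriented ordered graphs is a vertex map $f$ with $f(u)\le f(v)$ whenever $u\le v$ and such that $(f(u),f(v))$ is an arc of the target whenever $(u,v)$ is an arc; the target is itself an oriented ordered graph (so it has no pair of opposite arcs). The oriented ordered colouring $\overrightarrow{\chi}(\overrightarrow{G})$ is the minimum number of vertices of an oriented ordered graph $H$ admitting an ordered homomorphism $\overrightarrow{G}\to H$. $\overrightarrow{M}_2$ denotes the ordered matching $M_2$ (vertices $a_1<b_1<a_2<b_2$, edges $\{a_1,b_1\},\{a_2,b_2\}$) with any orientation of its edges, and $\overrightarrow{P}_3$ denotes the ordered path $P_3$ (vertices $v_1<v_2<v_3$, edges $\{v_1,v_2\},\{v_2,v_3\}$) with any orientation of its edges; containing one as a subgraph means there is an injective order-preserving vertex map sending arcs to arcs. *)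

theory Defs
  imports Main
begin

definition oriented_ordered_graph :: "('a::linorder) set \<Rightarrow> ('a \<times> 'a) set \<Rightarrow> bool" where
  "oriented_ordered_graph V A \<longleftrightarrow> finite V \<and> A \<subseteq> V \<times> V \<and>
     (\<forall>u v. (u, v) \<in> A \<longrightarrow> u \<noteq> v \<and> (v, u) \<notin> A)"

definition ordered_hom ::
  "('a::linorder) set \<Rightarrow> ('a \<times> 'a) set \<Rightarrow> ('b::linorder) set \<Rightarrow> ('b \<times> 'b) set \<Rightarrow> ('a \<Rightarrow> 'b) \<Rightarrow> bool" where
  "ordered_hom V A W B f \<longleftrightarrow> f ` V \<subseteq> W \<and>
     (\<forall>u\<in>V. \<forall>v\<in>V. u \<le> v \<longrightarrow> f u \<le> f v) \<and>
     (\<forall>u v. (u, v) \<in> A \<longrightarrow> (f u, f v) \<in> B)"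

text \<open>Targets are taken with vertices in nat,
which is no restriction since every finite linear order embeds in nat.\<close>

definition oriented_ordered_chi :: "('a::linorder) set \<Rightarrow> ('a \<times> 'a) set \<Rightarrow> nat" where
  "oriented_ordered_chi V A = (LEAST k. \<exists>(W::nat set) B f.
      oriented_ordered_graph W B \<and> ordered_hom V A W B f \<and> card W = k)"

definition contains_ordered_subgraph ::
  "('a::linorder) set \<Rightarrow> ('a \<times> 'a) set \<Rightarrow> ('b::linorder) set \<Rightarrow> ('b \<times> 'b) set \<Rightarrow> bool" where
  "contains_ordered_subgraph V A P Q \<longleftrightarrow> (\<exists>f. f ` P \<subseteq> V \<and> strict_mono_on P f \<and>
      (\<forall>u v. (u, v) \<in> Q \<longrightarrow> (f u, f v) \<in> A))"

definition M2_orientations :: "(nat set \<times> (nat \<times> nat) set) set" where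
  "M2_orientations = {({0,1,2,3}, {e1, e2}) | e1 e2.
      e1 \<in> {(0,1),(1,0)} \<and> e2 \<in> {(2,3),(3,2)}}"

definition P3_orientations :: "(nat set \<times> (nat \<times> nat) set) set" where
  "P3_orientations = {({0,1,2}, {e1, e2}) | e1 e2.
      e1 \<in> {(0,1),(1,0)} \<and> e2 \<in> {(1,2),(2,1)}}"

definition ordered_degree :: "('a \<times> 'a) set \<Rightarrow> 'a \<Rightarrow> nat" where
  "ordered_degree A v = card {u. (u, v) \<in> A \<or> (v, u) \<in> A}"

end

theory Submission
  imports Defs
begin

definition Ar :: "nat \<Rightarrow> (nat \<times> nat) set" where
  "Ar n = {(i, 2*n-1-i) | i. i<n \<and> even i} \<union> {(2*n-1-i, i) | i. i<n \<and> odd i}"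

lemma Ar_E:
  assumes "(u,v) \<in> Ar n"
  shows "u+v+1 = 2*n \<and> ((u<n \<and> even u) \<or> (v<n \<and> odd v))"
  using assms unfolding Ar_def by auto

lemma Ar_I1: "i<n \<Longrightarrow> even i \<Longrightarrow> (i, 2*n-1-i) \<in> Ar n"
  unfolding Ar_def by auto

lemma Ar_I2: "i<n \<Longrightarrow> odd i \<Longrightarrow> (2*n-1-i, i) \<in> Ar n"
  unfolding Ar_def by auto

lemma Ar_opp: "(u,v) \<in> Ar n \<Longrightarrow> (v,u) \<notin> Ar n"
proof
  assume a: "(u,v) \<in> Ar n" and b: "(v,u) \<in> Ar n"
  have 1: "u+v+1 = 2*n" and 2: "(u<n \<and> even u) \<or> (v<n \<and> odd v)" using Ar_E[OF a] by auto
  have 3: "(v<n \<and> even v) \<or> (u<n \<and> odd u)" using Ar_E[OF b] by auto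
  show False
  proof (cases "u < n")
    case True
    then have "\<not> v < n" using 1 by linarith
    then show False using 2 3 True by auto
  next
    case False
    then show False using 2 3 by auto
  qed
qed

lemma Ar_graph: "oriented_ordered_graph {0..<2*n} (Ar n)"
  unfolding oriented_ordered_graph_def
proof (intro conjI allI impI)
  show "finite {0..<2*n}" by simp
  show "Ar n \<subseteq> {0..<2*n} \<times> {0..<2*n}"
  proof
    fix x assume "x \<in> Ar n"
    then obtain u v where "x = (u,v)" "u+v+1 = 2*n" using Ar_E by (cases x) blast
    then show "x \<in> {0..<2*n} \<times> {0..<2*n}" by auto
  qed
  fix u v assume a: "(u,v) \<in> Ar n"
  have "u+v+1 = 2*n" using Ar_E[OF a] by blast
  then show "u \<noteq> v" by presburger
  show "(v, u) \<notin> Ar n" using Ar_opp[OF a] by blast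
qed

lemma Ar_deg:
  assumes "v < 2*n"
  shows "ordered_degree (Ar n) v = 1"
proof -
  have "{u. (u, v) \<in> Ar n \<or> (v, u) \<in> Ar n} = {2*n-1-v}"
  proof
    show "{u. (u, v) \<in> Ar n \<or> (v, u) \<in> Ar n} \<subseteq> {2*n-1-v}"
    proof
      fix u assume "u \<in> {u. (u, v) \<in> Ar n \<or> (v, u) \<in> Ar n}"
      then have "u+v+1 = 2*n" using Ar_E[of u v n] Ar_E[of v u n] by auto
      then show "u \<in> {2*n-1-v}" by simp
    qed
    show "{2*n-1-v} \<subseteq> {u. (u, v) \<in> Ar n \<or> (v, u) \<in> Ar n}"
    proof (cases "v < n")
      case True
      then show ?thesis using Ar_I1[of v n] Ar_I2[of v n] by auto
    next
      case False
      define i where "i = 2*n-1-v"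
      have i: "i < n" "v = 2*n-1-i" using False assms unfolding i_def by auto
      have e: "2*n-1-v = i" using i by simp
      show ?thesis unfolding e using Ar_I1[of i n] Ar_I2[of i n] i by auto
    qed
  qed
  then show ?thesis unfolding ordered_degree_def by simp
qed

lemma mono_count:
  fixes f :: "nat \<Rightarrow> 'b::linorder"
  assumes "\<forall>i j. i \<le> j \<longrightarrow> j \<le> m \<longrightarrow> f i \<le> f j"
  shows "card {k. k<m \<and> f k < f (Suc k)} + 1 \<le> card (f ` {0..m})"
  using assms
proof (induction m)
  case 0
  then show ?case by simp
next
  case (Suc m)
  have IH: "card {k. k<m \<and> f k < f (Suc k)} + 1 \<le> card (f ` {0..m})"
    using Suc by auto
  have img: "f ` {0..Suc m} = insert (f (Suc m)) (f ` {0..m})"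
    by (auto simp: le_Suc_eq)
  show ?case
  proof (cases "f m < f (Suc m)")
    case True
    have s: "{k. k<Suc m \<and> f k < f (Suc k)} = insert m {k. k<m \<and> f k < f (Suc k)}"
      using True by auto
    have "f (Suc m) \<notin> f ` {0..m}"
    proof
      assume "f (Suc m) \<in> f ` {0..m}"
      then obtain j where "j \<le> m" "f j = f (Suc m)" by auto
      moreover have "f j \<le> f m" using Suc.prems \<open>j \<le> m\<close> by auto
      ultimately show False using True by simp
    qed
    then show ?thesis unfolding img s by simp (use IH in simp)
  next
    case False
    have s: "{k. k<Suc m \<and> f k < f (Suc k)} = {k. k<m \<and> f k < f (Suc k)}"
      using False by (auto simp: less_Suc_eq)
    have "card (f ` {0..m}) \<le> card (f ` {0..Suc m})"
      unfolding img by (simp add: card_insert_le)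
    then show ?thesis unfolding s using IH by simp
  qed
qed

lemma lower:
  assumes n: "n \<ge> 1" and G: "oriented_ordered_graph W B"
    and h: "ordered_hom {0..<2*n} (Ar n) W B f"
  shows "n + 1 \<le> card W"
proof -
  have fin: "finite W" using G unfolding oriented_ordered_graph_def by auto
  have mono: "\<forall>i j. i \<le> j \<longrightarrow> j \<le> 2*n-1 \<longrightarrow> f i \<le> f j"
    using h n unfolding ordered_hom_def by auto
  have sub: "f ` {0..2*n-1} \<subseteq> W"
    using h n unfolding ordered_hom_def by auto
  have arc: "\<And>u v. (u,v) \<in> Ar n \<Longrightarrow> (f u, f v) \<in> B"
    using h unfolding ordered_hom_def by auto
  have noloop: "\<And>a b. (a,b) \<in> B \<Longrightarrow> a \<noteq> b \<and> (b,a) \<notin> B"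
    using G unfolding oriented_ordered_graph_def by auto
  define S where "S = {k. k<2*n-1 \<and> f k < f (Suc k)}"
  have key: "f i < f (Suc i) \<or> f (2*n-2-i) < f (2*n-1-i)" if i: "Suc i < n" for i
  proof (rule ccontr)
    assume "\<not> ?thesis"
    moreover have "f i \<le> f (Suc i)" using mono i by auto
    moreover have "f (2*n-2-i) \<le> f (2*n-1-i)" using mono i by auto
    ultimately have e1: "f i = f (Suc i)" and e2: "f (2*n-2-i) = f (2*n-1-i)" by auto
    have eq: "2*n-1-Suc i = 2*n-2-i" by simp
    show False
    proof (cases "even i")
      case True
      have "(f i, f (2*n-1-i)) \<in> B" using arc Ar_I1[of i n] True i by auto
      moreover have "(f (2*n-1-Suc i), f (Suc i)) \<in> B" using arc Ar_I2[of "Suc i" n] True i by auto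
      ultimately show False using noloop e1 e2 eq by metis
    next
      case False
      have "(f (2*n-1-i), f i) \<in> B" using arc Ar_I2[of i n] False i by auto
      moreover have "(f (Suc i), f (2*n-1-Suc i)) \<in> B" using arc Ar_I1[of "Suc i" n] False i by auto
      ultimately show False using noloop e1 e2 eq by metis
    qed
  qed
  have mid: "f (n-1) < f (Suc (n-1))"
  proof -
    have "f (n-1) \<le> f (Suc (n-1))" using mono n by auto
    moreover have "f (n-1) \<noteq> f (Suc (n-1))"
    proof (cases "even (n-1)")
      case True
      have "(f (n-1), f (2*n-1-(n-1))) \<in> B" using arc Ar_I1[of "n-1" n] True n by auto
      moreover have "2*n-1-(n-1) = Suc (n-1)" using n by simp
      ultimately show ?thesis using noloop by metis
    next
      case False
      have "(f (2*n-1-(n-1)), f (n-1)) \<in> B" using arc Ar_I2[of "n-1" n] False n by auto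
      moreover have "2*n-1-(n-1) = Suc (n-1)" using n by simp
      ultimately show ?thesis using noloop by metis
    qed
    ultimately show ?thesis by simp
  qed
  define g where "g i = (if i = n-1 then n-1 else if f i < f (Suc i) then i else 2*n-2-i)" for i
  have gS: "g ` {..<n} \<subseteq> S"
  proof
    fix x assume "x \<in> g ` {..<n}"
    then obtain i where i: "i < n" "x = g i" by auto
    show "x \<in> S"
    proof (cases "i = n-1")
      case True then show ?thesis using i mid n unfolding g_def S_def by auto
    next
      case False
      then have "Suc i < n" using i by auto
      moreover have "Suc (2*n-2-i) = 2*n-1-i" using \<open>Suc i < n\<close> by simp
      ultimately show ?thesis using key[of i] i unfolding g_def S_def by auto
    qed
  qed
  have ginj: "inj_on g {..<n}"
  proof (rule inj_onI)
    fix x y assume x: "x \<in> {..<n}" and y: "y \<in> {..<n}" and e: "g x = g y"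
    have cls: "\<And>i. i < n \<Longrightarrow> (i = n-1 \<and> g i = n-1) \<or> (i < n-1 \<and> g i = i) \<or> (i < n-1 \<and> g i = 2*n-2-i \<and> g i > n-1)"
      unfolding g_def by auto
    show "x = y" using cls[of x] cls[of y] x y e by auto
  qed
  have "n \<le> card S"
  proof -
    have "card (g ` {..<n}) = n" using ginj by (simp add: card_image)
    moreover have "finite S" unfolding S_def by auto
    ultimately show ?thesis using gS card_mono by metis
  qed
  moreover have "card S + 1 \<le> card (f ` {0..2*n-1})"
    using mono_count[OF mono] unfolding S_def by simp
  moreover have "card (f ` {0..2*n-1}) \<le> card W" using sub fin card_mono by metis
  ultimately show ?thesis by simp
qed

lemma upper:
  assumes n: "n \<ge> 1"
  shows "oriented_ordered_graph {0..n} ((\<lambda>(u,v). (min u n, min v n)) ` Ar n)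
    \<and> ordered_hom {0..<2*n} (Ar n) {0..n} ((\<lambda>(u,v). (min u n, min v n)) ` Ar n) (\<lambda>u. min u n)"
proof
  let ?B = "(\<lambda>(u,v). (min u n, min v n)) ` Ar n"
  have img: "(a, b) \<in> ?B \<Longrightarrow> (a < n \<and> b = n \<and> (a, 2*n-1-a) \<in> Ar n) \<or> (b < n \<and> a = n \<and> (2*n-1-b, b) \<in> Ar n)" for a b
  proof -
    assume "(a,b) \<in> ?B"
    then obtain u v where uv: "(u,v) \<in> Ar n" "a = min u n" "b = min v n" by auto
    then have "u+v+1 = 2*n" using Ar_E by blast
    then have e1: "v = 2*n-1-u" and e2: "u = 2*n-1-v" by auto
    show ?thesis
    proof (cases "u < n")
      case True
      then have "min v n = n" using e1 by auto
      then show ?thesis using uv True e1 by auto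
    next
      case False
      then have "v < n" using \<open>u+v+1 = 2*n\<close> by linarith
      then show ?thesis using uv False e2 by auto
    qed
  qed
  show "oriented_ordered_graph {0..n} ?B"
    unfolding oriented_ordered_graph_def
  proof (intro conjI allI impI)
    show "finite {0..n}" by simp
    show "?B \<subseteq> {0..n} \<times> {0..n}" by auto
    fix u v assume "(u,v) \<in> ?B"
    then show "u \<noteq> v" using img[of u v] by auto
    show "(v, u) \<notin> ?B"
    proof
      assume "(v,u) \<in> ?B"
      then show False using img[of u v] img[of v u] \<open>(u,v) \<in> ?B\<close> Ar_opp by blast
    qed
  qed
  show "ordered_hom {0..<2*n} (Ar n) {0..n} ?B (\<lambda>u. min u n)"
    unfolding ordered_hom_def by force
qed

theorem proposition3:
  fixes n :: nat
  assumes "n \<ge> 1"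
  shows "\<exists>(V::nat set) A. oriented_ordered_graph V A \<and> card V = 2 * n \<and>
    (\<forall>v\<in>V. ordered_degree A v = 1) \<and>
    (\<forall>(P, Q)\<in>M2_orientations. \<not> contains_ordered_subgraph V A P Q) \<and>
    (\<forall>(P, Q)\<in>P3_orientations. \<not> contains_ordered_subgraph V A P Q) \<and>
    oriented_ordered_chi V A = n + 1"
proof (intro exI conjI)
  show "oriented_ordered_graph {0..<2*n} (Ar n)" by (rule Ar_graph)
  show "card {0..<2*n} = 2*n" by simp
  show "\<forall>v\<in>{0..<2*n}. ordered_degree (Ar n) v = 1" using Ar_deg by auto
  have sumE: "\<And>u v. (u,v) \<in> Ar n \<Longrightarrow> u + v + 1 = 2*n" using Ar_E by blast
  show "\<forall>(P, Q)\<in>M2_orientations. \<not> contains_ordered_subgraph {0..<2*n} (Ar n) P Q"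
  proof (clarify)
    fix P Q assume PQ: "(P,Q) \<in> M2_orientations" and c: "contains_ordered_subgraph {0..<2*n} (Ar n) P Q"
    obtain f where f: "strict_mono_on P f" "\<forall>u v. (u, v) \<in> Q \<longrightarrow> (f u, f v) \<in> Ar n"
      using c unfolding contains_ordered_subgraph_def by auto
    have P: "P = {0,1,2,3}" using PQ unfolding M2_orientations_def by auto
    obtain e1 e2 where Q: "Q = {e1,e2}" "e1 \<in> {(0,1),(1,0)}" "e2 \<in> {(2,3),(3,2)}"
      using PQ unfolding M2_orientations_def by auto
    have "(f 0, f 1) \<in> Ar n \<or> (f 1, f 0) \<in> Ar n" using Q f(2) by auto
    then have s1: "f 0 + f 1 + 1 = 2*n" using sumE by (metis add.commute)
    have "(f 2, f 3) \<in> Ar n \<or> (f 3, f 2) \<in> Ar n" using Q f(2) by auto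
    then have s2: "f 2 + f 3 + 1 = 2*n" using sumE by (metis add.commute)
    have "f 0 < f 2" "f 1 < f 3" using f(1) P unfolding strict_mono_on_def by auto
    then show False using s1 s2 by simp
  qed
  show "\<forall>(P, Q)\<in>P3_orientations. \<not> contains_ordered_subgraph {0..<2*n} (Ar n) P Q"
  proof (clarify)
    fix P Q assume PQ: "(P,Q) \<in> P3_orientations" and c: "contains_ordered_subgraph {0..<2*n} (Ar n) P Q"
    obtain f where f: "strict_mono_on P f" "\<forall>u v. (u, v) \<in> Q \<longrightarrow> (f u, f v) \<in> Ar n"
      using c unfolding contains_ordered_subgraph_def by auto
    have P: "P = {0,1,2}" using PQ unfolding P3_orientations_def by auto
    obtain e1 e2 where Q: "Q = {e1,e2}" "e1 \<in> {(0,1),(1,0)}" "e2 \<in> {(1,2),(2,1)}"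
      using PQ unfolding P3_orientations_def by auto
    have "(f 0, f 1) \<in> Ar n \<or> (f 1, f 0) \<in> Ar n" using Q f(2) by auto
    then have s1: "f 0 + f 1 + 1 = 2*n" using sumE by (metis add.commute)
    have "(f 1, f 2) \<in> Ar n \<or> (f 2, f 1) \<in> Ar n" using Q f(2) by auto
    then have s2: "f 1 + f 2 + 1 = 2*n" using sumE by (metis add.commute)
    have "f 0 < f 2" using f(1) P unfolding strict_mono_on_def by auto
    then show False using s1 s2 by simp
  qed
  show "oriented_ordered_chi {0..<2*n} (Ar n) = n + 1"
    unfolding oriented_ordered_chi_def
  proof (rule Least_equality)
    show "\<exists>(W::nat set) B f. oriented_ordered_graph W B \<and> ordered_hom {0..<2*n} (Ar n) W B f \<and> card W = n + 1"
      using upper[OF assms] by fastforce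
    fix k assume "\<exists>(W::nat set) B f. oriented_ordered_graph W B \<and> ordered_hom {0..<2*n} (Ar n) W B f \<and> card W = k"
    then show "n + 1 \<le> k" using lower[OF assms] by blast
  qed
qed

end
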